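(* Let $(X,\mu)$ be a measure space and $\mathcal{E}$ a finite collection of measurable sets with $0<\mu(R)<\infty$ for all $R\in\mathcal{E}$. For each $f\in L^1(X)$ there exists a sparse subfamily $\mathcal{S}\subseteq\mathcal{E}$ such that $$\mathcal{M}_\mathcal{E}f\le\mathcal{P}^{\frac12}_\mathcal{E}(\mathcal{M}_\mathcal{S}f)\quad\text{pointwise}.$$
   Context: $\langle f\rangle_R=\frac1{\mu(R)}\int_Rf\,d\mu$. For a family $\mathcal{F}$ of such sets, $\mathcal{M}_\mathcal{F}f=\sup_{R\in\mathcal{F}}|\langle f\rangle_R|\mathbf{1}_R$. $\mathsf{P}^r_R(g):=\inf\{\lambda\in\mathbb{R}:\mu(\{x\in R:g(x)>\lambda\})\le r\mu(R)\}$ and $\mathcal{P}^r_\mathcal{E}g:=\sup_{R\in\mathcal{E}}\mathsf{P}^r_R(g)\mathbf{1}_R$. A subfamily $\mathcal{S}$ is sparse if there exist pairwise disjoint sets $E_R\subseteq R$, $R\in\mathcal{S}$, with $\mu(E_R)\ge\frac12\mu(R)$. *)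

theory Defs
  imports "HOL-Analysis.Analysis"
begin

definition avg :: "'a measure \<Rightarrow> ('a \<Rightarrow> real) \<Rightarrow> 'a set \<Rightarrow> real" where
  "avg M f R = (1 / measure M R) * (LINT x:R|M. f x)"

definition fsup :: "'b set \<Rightarrow> ('b \<Rightarrow> real) \<Rightarrow> real" where
  "fsup F h = (if F = {} then 0 else (SUP R\<in>F. h R))"

definition maxop :: "'a measure \<Rightarrow> 'a set set \<Rightarrow> ('a \<Rightarrow> real) \<Rightarrow> 'a \<Rightarrow> real" where
  "maxop M F f x = fsup F (\<lambda>R. \<bar>avg M f R\<bar> * indicator R x)"

definition Pquant :: "'a measure \<Rightarrow> real \<Rightarrow> 'a set \<Rightarrow> ('a \<Rightarrow> real) \<Rightarrow> real" where
  "Pquant M r R g = Inf {l::real. measure M {x\<in>R. g x > l} \<le> r * measure M R}"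

definition Pop :: "'a measure \<Rightarrow> real \<Rightarrow> 'a set set \<Rightarrow> ('a \<Rightarrow> real) \<Rightarrow> 'a \<Rightarrow> real" where
  "Pop M r E g x = fsup E (\<lambda>R. Pquant M r R g * indicator R x)"

definition sparse :: "'a measure \<Rightarrow> 'a set set \<Rightarrow> bool" where
  "sparse M S \<longleftrightarrow> (\<exists>ER. disjoint_family_on ER S \<and>
      (\<forall>R\<in>S. ER R \<in> sets M \<and> ER R \<subseteq> R \<and> measure M (ER R) \<ge> measure M R / 2))"

end

theory Submission
  imports Defs
begin

lemma maxop_nonneg:
  assumes "finite S" shows "0 \<le> maxop M S f x"
proof (cases "S = {}")
  case False
  then obtain R where "R \<in> S" by blast
  have "0 \<le> (SUP R\<in>S. \<bar>avg M f R\<bar> * indicator R x)"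
    using assms by (intro cSUP_upper2[OF _ \<open>R \<in> S\<close>]) auto
  then show ?thesis using False by (simp add: maxop_def fsup_def)
qed (simp add: maxop_def fsup_def)

lemma maxop_upper:
  assumes "finite S" "Q \<in> S" "x \<in> Q"
  shows "\<bar>avg M f Q\<bar> \<le> maxop M S f x"
proof -
  have "\<bar>avg M f Q\<bar> = \<bar>avg M f Q\<bar> * indicator Q x" using assms by simp
  also have "\<dots> \<le> (SUP R\<in>S. \<bar>avg M f R\<bar> * indicator R x)"
    using assms by (intro cSUP_upper) auto
  finally show ?thesis using assms unfolding maxop_def fsup_def by auto
qed

lemma maxop_mono:
  assumes "finite S'" "S \<subseteq> S'"
  shows "maxop M S f x \<le> maxop M S' f x"
proof (cases "S = {}")
  case True
  then show ?thesis using maxop_nonneg[of S' M f x] assms by (simp add: maxop_def fsup_def)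
next
  case False
  then have "S' \<noteq> {}" using assms by auto
  have "(SUP R\<in>S. \<bar>avg M f R\<bar> * indicator R x) \<le> (SUP R\<in>S'. \<bar>avg M f R\<bar> * indicator R x)"
    using False assms by (intro cSUP_subset_mono) auto
  then show ?thesis using False \<open>S' \<noteq> {}\<close> by (simp add: maxop_def fsup_def)
qed

lemma maxop_le_sum:
  assumes "finite S"
  shows "maxop M S f x \<le> (\<Sum>Q\<in>S. \<bar>avg M f Q\<bar>)"
proof (cases "S = {}")
  case True then show ?thesis by (simp add: maxop_def fsup_def)
next
  case False
  have "(SUP R\<in>S. \<bar>avg M f R\<bar> * indicator R x) \<le> (\<Sum>Q\<in>S. \<bar>avg M f Q\<bar>)"
  proof (rule cSUP_least[OF False])
    fix R assume "R \<in> S"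
    have "\<bar>avg M f R\<bar> * indicator R x \<le> \<bar>avg M f R\<bar>" by (simp add: indicator_def)
    also have "\<dots> \<le> (\<Sum>Q\<in>S. \<bar>avg M f Q\<bar>)"
      using assms \<open>R \<in> S\<close> by (intro member_le_sum) auto
    finally show "\<bar>avg M f R\<bar> * indicator R x \<le> (\<Sum>Q\<in>S. \<bar>avg M f Q\<bar>)" .
  qed
  then show ?thesis using False by (simp add: maxop_def fsup_def)
qed

lemma maxop_meas:
  assumes "finite S" "\<And>R. R \<in> S \<Longrightarrow> R \<in> sets M"
  shows "maxop M S f \<in> borel_measurable M"
proof (cases "S = {}")
  case True then show ?thesis by (simp add: maxop_def fsup_def cong: measurable_cong)
next
  case False
  have "(\<lambda>x. SUP R\<in>S. \<bar>avg M f R\<bar> * indicator R x) \<in> borel_measurable M"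
    using assms by (intro borel_measurable_cSUP) (auto intro!: bdd_above_finite simp: countable_finite)
  then show ?thesis using False unfolding maxop_def fsup_def by simp
qed


lemma main_induct:
  assumes fin: "finite E0"
    and sets: "\<And>R. R \<in> E0 \<Longrightarrow> R \<in> sets M"
    and pos: "\<And>R. R \<in> E0 \<Longrightarrow> 0 < emeasure M R \<and> emeasure M R < \<infinity>"
  shows "\<exists>S. S \<subseteq> E0 \<and> sparse M S \<and>
     (\<forall>R\<in>E0. measure M {x\<in>R. \<bar>avg M f R\<bar> \<le> maxop M S f x} > measure M R / 2)"
proof -
  define c where "c R = \<bar>avg M f R\<bar>" for R
  have meas_lvl: "{x\<in>R. a \<le> maxop M S f x} \<in> sets M" if "S \<subseteq> E0" "R \<in> E0" for S R a
  proof -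
    have "maxop M S f \<in> borel_measurable M"
      using that fin sets by (intro maxop_meas) (auto intro: finite_subset)
    then have "{x\<in>space M. a \<le> maxop M S f x} \<in> sets M" by (simp add: borel_measurable_iff_ge)
    moreover have "{x\<in>R. a \<le> maxop M S f x} = R \<inter> {x\<in>space M. a \<le> maxop M S f x}"
      using sets.sets_into_space[OF sets[OF \<open>R \<in> E0\<close>]] by auto
    ultimately show ?thesis using sets[OF \<open>R \<in> E0\<close>] by auto
  qed
  have fmeas: "A \<in> fmeasurable M" if "A \<subseteq> R" "A \<in> sets M" "R \<in> E0" for A R
  proof -
    have "emeasure M A \<le> emeasure M R" using that sets by (intro emeasure_mono) auto
    then show ?thesis using pos[OF \<open>R \<in> E0\<close>] that by (auto simp: fmeasurable_def)
  qed
  have mpos: "measure M R > 0" if "R \<in> E0" for R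
    using pos[OF that] by (auto simp: measure_def enn2real_positive_iff)
  have "\<forall>E. E \<subseteq> E0 \<longrightarrow> (\<exists>S. S \<subseteq> E \<and> sparse M S \<and>
     (\<forall>R\<in>E. measure M {x\<in>R. c R \<le> maxop M S f x} > measure M R / 2))"
  proof (intro allI impI)
    fix E assume "E \<subseteq> E0"
    then have "finite E" using fin finite_subset by auto
    then show "\<exists>S. S \<subseteq> E \<and> sparse M S \<and>
     (\<forall>R\<in>E. measure M {x\<in>R. c R \<le> maxop M S f x} > measure M R / 2)"
      using \<open>E \<subseteq> E0\<close>
    proof (induction E rule: finite_ranking_induct[where f="\<lambda>R. - c R"])
      case empty
      have "sparse M {}" unfolding sparse_def disjoint_family_on_def by blast
      then show ?case by blast
    next
      case (insert R E)
      have "E \<subseteq> E0" using insert.prems by simp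
      then have "\<exists>S. S \<subseteq> E \<and> sparse M S \<and>
        (\<forall>R\<in>E. measure M {x\<in>R. c R \<le> maxop M S f x} > measure M R / 2)" by (rule insert.IH)
      then obtain S ER where SE: "S \<subseteq> E" and dis: "disjoint_family_on ER S"
        and ERp: "\<forall>Q\<in>S. ER Q \<in> sets M \<and> ER Q \<subseteq> Q \<and> measure M (ER Q) \<ge> measure M Q / 2"
        and inv: "\<forall>Q\<in>E. measure M {x\<in>Q. c Q \<le> maxop M S f x} > measure M Q / 2"
        unfolding sparse_def by blast
      have RE0: "R \<in> E0" and EE0: "E \<subseteq> E0" using insert.prems by auto
      have cle: "c R \<le> c Q" if "Q \<in> E" for Q using insert.hyps(2)[OF that] by simp
      have finS: "finite S" using SE insert.hyps(1) finite_subset by auto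
      have US: "\<Union>S \<in> sets M" using finS SE EE0 sets by auto
      have RS: "R \<inter> \<Union>S \<in> sets M" using US sets[OF RE0] by auto
      show ?case
      proof (cases "measure M (R \<inter> \<Union>S) \<le> measure M R / 2")
        case True
        have RnS: "R \<notin> S"
        proof
          assume "R \<in> S" then have "R \<inter> \<Union>S = R" by auto
          then show False using True mpos[OF RE0] by auto
        qed
        define S' where "S' = insert R S"
        define ER' where "ER' = ER(R := R - \<Union>S)"
        have finS': "finite S'" using finS by (simp add: S'_def)
        have S'E0: "S' \<subseteq> E0" using SE EE0 RE0 by (auto simp: S'_def)
        have "disjoint_family_on ER' S'"
          unfolding disjoint_family_on_def
        proof (intro ballI impI)
          fix A B assume "A \<in> S'" "B \<in> S'" "A \<noteq> B"
          show "ER' A \<inter> ER' B = {}"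
          proof (cases "A = R")
            case True
            then have "B \<in> S" "B \<noteq> R" using \<open>B \<in> S'\<close> \<open>A \<noteq> B\<close> by (auto simp: S'_def)
            then have "ER B \<subseteq> \<Union>S" using ERp by blast
            then show ?thesis using True \<open>B \<noteq> R\<close> by (auto simp: ER'_def)
          next
            case False
            then have A: "A \<in> S" using \<open>A \<in> S'\<close> by (auto simp: S'_def)
            then have "ER A \<subseteq> \<Union>S" using ERp by blast
            show ?thesis
            proof (cases "B = R")
              case True
              then show ?thesis using \<open>ER A \<subseteq> \<Union>S\<close> False by (auto simp: ER'_def)
            next
              case False
              then have "B \<in> S" using \<open>B \<in> S'\<close> by (auto simp: S'_def)
              then have "ER A \<inter> ER B = {}" using dis A \<open>A \<noteq> B\<close> unfolding disjoint_family_on_def by blast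
              then show ?thesis using False \<open>A \<noteq> R\<close> by (simp add: ER'_def)
            qed
          qed
        qed
        moreover have "measure M (R - \<Union>S) \<ge> measure M R / 2"
        proof -
          have "R - \<Union>S = R - (R \<inter> \<Union>S)" by blast
          then have "measure M (R - \<Union>S) = measure M (R - (R \<inter> \<Union>S))" by simp
          also have "\<dots> = measure M R - measure M (R \<inter> \<Union>S)"
            using pos[OF RE0] sets[OF RE0] RS by (intro measure_Diff) auto
          finally show ?thesis using True by simp
        qed
        moreover have "\<forall>Q\<in>S'. ER' Q \<in> sets M \<and> ER' Q \<subseteq> Q \<and> measure M (ER' Q) \<ge> measure M Q / 2"
        proof
          fix Q assume "Q \<in> S'"
          show "ER' Q \<in> sets M \<and> ER' Q \<subseteq> Q \<and> measure M (ER' Q) \<ge> measure M Q / 2"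
          proof (cases "Q = R")
            case True
            have "R - \<Union>S \<in> sets M" using sets[OF RE0] US by auto
            then show ?thesis using True \<open>measure M (R - \<Union>S) \<ge> measure M R / 2\<close> by (simp add: ER'_def)
          next
            case False
            then have "Q \<in> S" using \<open>Q \<in> S'\<close> by (simp add: S'_def)
            then show ?thesis using ERp False by (simp add: ER'_def)
          qed
        qed
        ultimately have "sparse M S'" unfolding sparse_def by blast
        moreover have "\<forall>Q\<in>insert R E. measure M {x\<in>Q. c Q \<le> maxop M S' f x} > measure M Q / 2"
        proof
          fix Q assume "Q \<in> insert R E"
          then have QE0: "Q \<in> E0" using RE0 EE0 by auto
          show "measure M {x\<in>Q. c Q \<le> maxop M S' f x} > measure M Q / 2"
          proof (cases "Q = R")
            case True
            have RS': "R \<in> S'" by (simp add: S'_def)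
            have "c R \<le> maxop M S' f x" if "x \<in> R" for x
              unfolding c_def by (rule maxop_upper[OF finS' RS' that])
            then have "{x\<in>Q. c Q \<le> maxop M S' f x} = Q" using True by blast
            then show ?thesis using mpos[OF QE0] by simp
          next
            case False
            then have "Q \<in> E" using \<open>Q \<in> insert R E\<close> by auto
            have mono: "maxop M S f x \<le> maxop M S' f x" for x
              using maxop_mono[OF finS', of S M f x] by (auto simp: S'_def)
            have sub: "{x\<in>Q. c Q \<le> maxop M S f x} \<subseteq> {x\<in>Q. c Q \<le> maxop M S' f x}"
              using mono order_trans by blast
            have SE0: "S \<subseteq> E0" using SE EE0 by auto
            have "measure M {x\<in>Q. c Q \<le> maxop M S f x} \<le> measure M {x\<in>Q. c Q \<le> maxop M S' f x}"
              by (rule measure_mono_fmeasurable[OF sub meas_lvl[OF SE0 QE0] fmeas[OF _ meas_lvl[OF S'E0 QE0] QE0]]) auto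
            then show ?thesis using inv \<open>Q \<in> E\<close> by fastforce
          qed
        qed
        moreover have "S' \<subseteq> insert R E" using SE by (auto simp: S'_def)
        ultimately show ?thesis by blast
      next
        case False
        have "\<forall>Q\<in>insert R E. measure M {x\<in>Q. c Q \<le> maxop M S f x} > measure M Q / 2"
        proof
          fix Q assume "Q \<in> insert R E"
          show "measure M {x\<in>Q. c Q \<le> maxop M S f x} > measure M Q / 2"
          proof (cases "Q = R")
            case True
            have sub: "R \<inter> \<Union>S \<subseteq> {x\<in>R. c R \<le> maxop M S f x}"
            proof
              fix x assume "x \<in> R \<inter> \<Union>S"
              then obtain P where "P \<in> S" "x \<in> P" "x \<in> R" by auto
              then have "c R \<le> c P" using cle SE by auto
              also have "c P \<le> maxop M S f x"
                using maxop_upper[OF finS \<open>P \<in> S\<close> \<open>x \<in> P\<close>] by (simp add: c_def)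
              finally show "x \<in> {x\<in>R. c R \<le> maxop M S f x}" using \<open>x \<in> R\<close> by simp
            qed
            have "measure M (R \<inter> \<Union>S) \<le> measure M {x\<in>R. c R \<le> maxop M S f x}"
              using sub RS meas_lvl[of S R] SE EE0 RE0
              by (intro measure_mono_fmeasurable fmeas[OF _ _ RE0]) auto
            then show ?thesis using False True by simp
          next
            case False
            then show ?thesis using inv \<open>Q \<in> insert R E\<close> by auto
          qed
        qed
        moreover have "sparse M S" unfolding sparse_def using ERp dis by blast
        moreover have "S \<subseteq> insert R E" using SE by auto
        ultimately show ?thesis by blast
      qed
    qed
  qed
  then show ?thesis using fin unfolding c_def by auto
qed


theorem theorem1p5:
  fixes M :: "'a measure" and E :: "'a set set" and f :: "'a \<Rightarrow> real"
  assumes "finite E"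
    and "\<And>R. R \<in> E \<Longrightarrow> R \<in> sets M"
    and "\<And>R. R \<in> E \<Longrightarrow> 0 < emeasure M R \<and> emeasure M R < \<infinity>"
    and "integrable M f"
  shows "\<exists>S. S \<subseteq> E \<and> sparse M S \<and>
           (\<forall>x\<in>space M. maxop M E f x \<le> Pop M (1/2) E (maxop M S f) x)"
proof -
  obtain S where SE: "S \<subseteq> E" and sp: "sparse M S"
    and inv: "\<forall>R\<in>E. measure M {x\<in>R. \<bar>avg M f R\<bar> \<le> maxop M S f x} > measure M R / 2"
    using main_induct[OF assms(1-3), of f] by blast
  have finS: "finite S" using SE assms(1) finite_subset by blast
  define g where "g = maxop M S f"
  have gmeas: "g \<in> borel_measurable M"
    unfolding g_def using finS SE assms(2) by (intro maxop_meas) auto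
  have key: "\<bar>avg M f R\<bar> \<le> Pquant M (1/2) R g" if RE: "R \<in> E" for R
    unfolding Pquant_def
  proof (rule cInf_greatest)
    define B where "B = (\<Sum>Q\<in>S. \<bar>avg M f Q\<bar>)"
    have "{x\<in>R. g x > B} = {}" using maxop_le_sum[OF finS, of M f] by (auto simp: g_def B_def not_less)
    then show "{l. measure M {x\<in>R. g x > l} \<le> 1/2 * measure M R} \<noteq> {}"
    proof -
      have "measure M {x\<in>R. g x > B} \<le> 1/2 * measure M R"
        unfolding \<open>{x\<in>R. g x > B} = {}\<close> by simp
      then show ?thesis by blast
    qed
  next
    fix l assume l: "l \<in> {l. measure M {x\<in>R. g x > l} \<le> 1/2 * measure M R}"
    show "\<bar>avg M f R\<bar> \<le> l"
    proof (rule ccontr)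
      assume "\<not> \<bar>avg M f R\<bar> \<le> l"
      then have sub: "{x\<in>R. \<bar>avg M f R\<bar> \<le> g x} \<subseteq> {x\<in>R. g x > l}" by auto
      have Rs: "R \<in> sets M" using assms(2) RE by blast
      have "{x\<in>space M. \<bar>avg M f R\<bar> \<le> g x} \<in> sets M" using gmeas by (simp add: borel_measurable_iff_ge)
      moreover have "{x\<in>R. \<bar>avg M f R\<bar> \<le> g x} = R \<inter> {x\<in>space M. \<bar>avg M f R\<bar> \<le> g x}"
        using sets.sets_into_space[OF Rs] by blast
      ultimately have m1: "{x\<in>R. \<bar>avg M f R\<bar> \<le> g x} \<in> sets M" using Rs by auto
      have "{x\<in>space M. l < g x} \<in> sets M" using gmeas by (simp add: borel_measurable_iff_greater)
      moreover have "{x\<in>R. l < g x} = R \<inter> {x\<in>space M. l < g x}"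
        using sets.sets_into_space[OF Rs] by blast
      ultimately have m2: "{x\<in>R. l < g x} \<in> sets M" using Rs by auto
      have "emeasure M {x\<in>R. l < g x} \<le> emeasure M R" using Rs m2 by (intro emeasure_mono) auto
      then have f2: "{x\<in>R. l < g x} \<in> fmeasurable M" using assms(3)[OF RE] m2
        by (auto simp: fmeasurable_def)
      have "measure M {x\<in>R. \<bar>avg M f R\<bar> \<le> g x} \<le> measure M {x\<in>R. g x > l}"
        by (rule measure_mono_fmeasurable[OF sub m1 f2])
      then show False using l inv RE by (force simp: g_def)
    qed
  qed
  have "maxop M E f x \<le> Pop M (1/2) E g x" for x
  proof (cases "E = {}")
    case True then show ?thesis by (simp add: maxop_def Pop_def fsup_def)
  next
    case False
    have "(SUP R\<in>E. \<bar>avg M f R\<bar> * indicator R x) \<le> (SUP R\<in>E. Pquant M (1/2) R g * indicator R x)"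
    proof (rule cSUP_mono[OF False])
      show "bdd_above ((\<lambda>R. Pquant M (1/2) R g * indicator R x) ` E)"
        using assms(1) by (intro bdd_above_finite) auto
    next
      fix R assume "R \<in> E"
      then show "\<exists>R'\<in>E. \<bar>avg M f R\<bar> * indicator R x \<le> Pquant M (1/2) R' g * indicator R' x"
        using key[OF \<open>R \<in> E\<close>] by (intro bexI[of _ R]) (auto simp: indicator_def)
    qed
    then show ?thesis using False by (simp add: maxop_def Pop_def fsup_def)
  qed
  then show ?thesis using SE sp unfolding g_def by blast
qed

end
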